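(* Let $(R,B)$ be an EIC problem with problem graph $G$ and let $(\tilde N_1,\dots,\tilde N_n)$ be a neighborhood partition. For each $w\in[n]$, let $(R^{(w)},B^{(w)})$ be the EIC problem induced by $\tilde N_w$, and let $\beta^{(w)}\in\mathbb{F}_2^{h_w\times m}$ be (the zero-column extension of) a centralized linear broadcast solution to $(R^{(w)},B^{(w)})$. Then $\beta^{(1)},\dots,\beta^{(n)}$ is a task-based solution to $(R,B)$ of length $\sum_{i=1}^n h_i$.
   Context: An EIC problem is a pair $(R,B)$ of matrices in $\mathbb{F}_2^{n\times m}$ with disjoint supports (node $u$ needs block $a$ iff $R_{ua}=1$, has it iff $B_{ua}=1$). $P=\{(u,a):R_{ua}=1\}$. The problem graph $G=(V,E)$ has vertices $V=\{v_{(u,a)}:(u,a)\in P\}$ and a directed edge from $v_{(u,a)}$ to $v_{(w,b)}$ iff $B_{ub}=1$ or $a=b$. $B_u$ denotes row $u$ of $B$, $\mathrm{diag}(B_u)$ the diagonal matrix with diagonal $B_u$, $\boldsymbol e_a$ the $a$-th standard basis row vector. The sender neighborhood of node $k$ is $N_k=\{v_{(w,b)}\in V: B_{kb}=1\}$. A neighborhood partition is a tuple $(\tilde N_1,\dots,\tilde N_n)$ with $\tilde N_i\subseteq N_i$, pairwise disjoint, and $\bigcup_i\tilde N_i=V$. For $S\subseteq V$, the EIC problem induced by $S$ is defined on the block set $\mathcal{B}_S=\{a:\exists u,\ v_{(u,a)}\in S\}$: $R^{S}\in\mathbb{F}_2^{n\times\mathcal{B}_S}$ has $R^S_{ua}=1$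 iff $v_{(u,a)}\in S$, and $B^{S}$ is the restriction of $B$ to the columns $\mathcal{B}_S$; its problem graph is the induced subgraph $G|_S$. A centralized linear broadcast solution to an EIC problem $(R',B')$ on block set $\mathcal{B}$ is a matrix $\beta$ with $h$ rows and columns indexed by $\mathcal{B}$ such that for each requirement pair $(u,a)$ of $(R',B')$ there is $\boldsymbol\alpha$ with $\boldsymbol e_a=\boldsymbol\alpha\cdot\left[\begin{smallmatrix}\beta\\ \mathrm{diag}(B'_u)\end{smallmatrix}\right]$; its zero-column extension is the $h\times m$ matrix agreeing with $\beta$ on columns in $\mathcal{B}$ and zero elsewhere. A linear broadcast solution to $(R,B)$ is a tuple $\beta^{(1)},\dots,\beta^{(n)}$, $\beta^{(u)}\in\mathbb{F}_2^{h_u\times m}$, such that the $a$-th column of $\beta^{(u)}$ is zero whenever $B_{ua}=0$ and for each $(u,a)\in P$, $\boldsymbol e_a$ is an $\mathbb{F}_2$-linear combination of the rows of all $\beta^{(\ell)}$ and of $\mathrm{diag}(B_u)$. It is task-based if for every $(u,a)\in P$ there is $\ell\in[n]$ and $\boldsymbol\alpha\in\mathbb{F}_2^{h_\ell+m}$ with $\boldsymbol e_a=\boldsymbol\alpha\cdot\left[\begin{smallmatrix}\beta^{(\ell)}\\ \mathrm{diag}(B_u)\end{smallmatrix}\right]$. Its length is $\sum_u h_u$. *)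

theory Defs
  imports Main "HOL-Library.Z2"
begin

text \<open>F_2 is the type bit. Nodes are 0..<n, blocks 0..<m (0-based indexing).
 Matrices are functions row \<Rightarrow> column \<Rightarrow> bit; a vertex v_(u,a) is identified
 with the pair (u,a).\<close>

definition eic_problem :: "nat \<Rightarrow> nat \<Rightarrow> (nat \<Rightarrow> nat \<Rightarrow> bit) \<Rightarrow> (nat \<Rightarrow> nat \<Rightarrow> bit) \<Rightarrow> bool" where
  "eic_problem n m R B \<longleftrightarrow> (\<forall>u<n. \<forall>a<m. \<not> (R u a = 1 \<and> B u a = 1))"

text \<open>Requirement pairs P = vertex set of the problem graph.\<close>
definition req_pairs :: "nat \<Rightarrow> nat \<Rightarrow> (nat \<Rightarrow> nat \<Rightarrow> bit) \<Rightarrow> (nat \<times> nat) set" where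
  "req_pairs n m R = {(u, a). u < n \<and> a < m \<and> R u a = 1}"

definition problem_edges :: "nat \<Rightarrow> nat \<Rightarrow> (nat \<Rightarrow> nat \<Rightarrow> bit) \<Rightarrow> (nat \<Rightarrow> nat \<Rightarrow> bit)
    \<Rightarrow> ((nat \<times> nat) \<times> (nat \<times> nat)) set" where
  "problem_edges n m R B = {((u, a), (w, b)). (u, a) \<in> req_pairs n m R \<and> (w, b) \<in> req_pairs n m R
      \<and> (B u b = 1 \<or> a = b)}"

definition sender_nbhd :: "nat \<Rightarrow> nat \<Rightarrow> (nat \<Rightarrow> nat \<Rightarrow> bit) \<Rightarrow> (nat \<Rightarrow> nat \<Rightarrow> bit) \<Rightarrow> nat
    \<Rightarrow> (nat \<times> nat) set" where
  "sender_nbhd n m R B k = {(w, b) \<in> req_pairs n m R. B k b = 1}"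

definition nbhd_partition :: "nat \<Rightarrow> nat \<Rightarrow> (nat \<Rightarrow> nat \<Rightarrow> bit) \<Rightarrow> (nat \<Rightarrow> nat \<Rightarrow> bit)
    \<Rightarrow> (nat \<Rightarrow> (nat \<times> nat) set) \<Rightarrow> bool" where
  "nbhd_partition n m R B Nt \<longleftrightarrow>
     (\<forall>i<n. Nt i \<subseteq> sender_nbhd n m R B i) \<and>
     (\<forall>i<n. \<forall>j<n. i \<noteq> j \<longrightarrow> Nt i \<inter> Nt j = {}) \<and>
     (\<Union>i<n. Nt i) = req_pairs n m R"

text \<open>Induced problem: block set, requirement matrix (B^S is B restricted to the block set).\<close>
definition induced_blocks :: "(nat \<times> nat) set \<Rightarrow> nat set" where
  "induced_blocks S = {a. \<exists>u. (u, a) \<in> S}"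

definition induced_R :: "(nat \<times> nat) set \<Rightarrow> nat \<Rightarrow> nat \<Rightarrow> bit" where
  "induced_R S u a = (if (u, a) \<in> S then 1 else 0)"

definition unit_vec :: "'c \<Rightarrow> 'c \<Rightarrow> bit" where
  "unit_vec a = (\<lambda>c. if c = a then 1 else 0)"

definition diag_mat :: "('c \<Rightarrow> bit) \<Rightarrow> 'c \<Rightarrow> 'c \<Rightarrow> bit" where
  "diag_mat d = (\<lambda>r c. if r = c then d c else 0)"

definition stack :: "('r1 \<Rightarrow> 'c \<Rightarrow> bit) \<Rightarrow> ('r2 \<Rightarrow> 'c \<Rightarrow> bit) \<Rightarrow> ('r1 + 'r2) \<Rightarrow> 'c \<Rightarrow> bit" where
  "stack M D = (\<lambda>i c. case i of Inl k \<Rightarrow> M k c | Inr r \<Rightarrow> D r c)"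

definition is_lin_comb :: "'r set \<Rightarrow> 'c set \<Rightarrow> ('r \<Rightarrow> 'c \<Rightarrow> bit) \<Rightarrow> ('c \<Rightarrow> bit) \<Rightarrow> bool" where
  "is_lin_comb I C M v \<longleftrightarrow> (\<exists>\<alpha>. \<forall>c\<in>C. v c = (\<Sum>i\<in>I. \<alpha> i * M i c))"

definition centralized_solution :: "nat \<Rightarrow> nat set \<Rightarrow> (nat \<Rightarrow> nat \<Rightarrow> bit) \<Rightarrow> (nat \<Rightarrow> nat \<Rightarrow> bit)
    \<Rightarrow> nat \<Rightarrow> (nat \<Rightarrow> nat \<Rightarrow> bit) \<Rightarrow> bool" where
  "centralized_solution n C R' B' h \<beta> \<longleftrightarrow>
     (\<forall>u<n. \<forall>a\<in>C. R' u a = 1 \<longrightarrow>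
        is_lin_comb ({..<h} <+> C) C (stack \<beta> (diag_mat (B' u))) (unit_vec a))"

definition zero_col_ext :: "nat \<Rightarrow> nat set \<Rightarrow> nat \<Rightarrow> (nat \<Rightarrow> nat \<Rightarrow> bit) \<Rightarrow> (nat \<Rightarrow> nat \<Rightarrow> bit) \<Rightarrow> bool" where
  "zero_col_ext m C h \<beta> \<beta>' \<longleftrightarrow>
     (\<forall>i<h. \<forall>c<m. \<beta>' i c = (if c \<in> C then \<beta> i c else 0))"

definition linear_broadcast_solution :: "nat \<Rightarrow> nat \<Rightarrow> (nat \<Rightarrow> nat \<Rightarrow> bit) \<Rightarrow> (nat \<Rightarrow> nat \<Rightarrow> bit)
    \<Rightarrow> (nat \<Rightarrow> nat) \<Rightarrow> (nat \<Rightarrow> nat \<Rightarrow> nat \<Rightarrow> bit) \<Rightarrow> bool" where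
  "linear_broadcast_solution n m R B h \<beta> \<longleftrightarrow>
     (\<forall>u<n. \<forall>i<h u. \<forall>a<m. B u a = 0 \<longrightarrow> \<beta> u i a = 0) \<and>
     (\<forall>(u, a) \<in> req_pairs n m R.
        is_lin_comb ((SIGMA l:{..<n}. {..<h l}) <+> {..<m}) {..<m}
          (stack (\<lambda>(l, i) c. \<beta> l i c) (diag_mat (B u))) (unit_vec a))"

definition task_based_solution :: "nat \<Rightarrow> nat \<Rightarrow> (nat \<Rightarrow> nat \<Rightarrow> bit) \<Rightarrow> (nat \<Rightarrow> nat \<Rightarrow> bit)
    \<Rightarrow> (nat \<Rightarrow> nat) \<Rightarrow> (nat \<Rightarrow> nat \<Rightarrow> nat \<Rightarrow> bit) \<Rightarrow> bool" where
  "task_based_solution n m R B h \<beta> \<longleftrightarrow>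
     linear_broadcast_solution n m R B h \<beta> \<and>
     (\<forall>(u, a) \<in> req_pairs n m R. \<exists>l<n.
        is_lin_comb ({..<h l} <+> {..<m}) {..<m} (stack (\<beta> l) (diag_mat (B u))) (unit_vec a))"

definition solution_length :: "nat \<Rightarrow> (nat \<Rightarrow> nat) \<Rightarrow> nat" where
  "solution_length n h = (\<Sum>u<n. h u)"

end

theory Submission
  imports Defs
begin

declare add_bit_eq_xor[simp del] mult_bit_eq_and[simp del]

lemma diag_sum:
  assumes "finite D"
  shows "(\<Sum>r\<in>D. (f r::bit) * diag_mat d r c) = (if c \<in> D then f c * d c else 0)"
proof -
  have "(\<Sum>r\<in>D. f r * diag_mat d r c) = (\<Sum>r\<in>D. if r = c then f c * d c else 0)"
    by (rule sum.cong) (auto simp: diag_mat_def)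
  also have "\<dots> = (if c \<in> D then f c * d c else 0)"
    using assms by (simp add: sum.delta')
  finally show ?thesis .
qed

lemma ext_lc:
  fixes h :: nat and C D :: "'c set"
  assumes lc: "is_lin_comb ({..<h} <+> C) C (stack M (diag_mat d)) v"
    and CD: "C \<subseteq> D" and fD: "finite D"
    and v0: "\<forall>c\<in>D. c \<notin> C \<longrightarrow> v c = 0"
    and M': "\<forall>i<h. \<forall>c\<in>D. M' i c = (if c \<in> C then M i c else 0)"
  shows "is_lin_comb ({..<h} <+> D) D (stack M' (diag_mat d)) v"
proof -
  obtain \<alpha> where \<alpha>: "\<forall>c\<in>C. v c = (\<Sum>i\<in>{..<h} <+> C. \<alpha> i * stack M (diag_mat d) i c)"
    using lc unfolding is_lin_comb_def by blast
  define \<alpha>' where "\<alpha>' = (\<lambda>x. case x of Inl k \<Rightarrow> \<alpha> (Inl k) | Inr r \<Rightarrow> if r \<in> C then \<alpha> (Inr r) else 0)"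
  have fC: "finite C" using CD fD finite_subset by blast
  show ?thesis unfolding is_lin_comb_def
  proof (intro exI[of _ \<alpha>'] ballI)
    fix c assume c: "c \<in> D"
    have s1: "(\<Sum>i\<in>{..<h} <+> D. \<alpha>' i * stack M' (diag_mat d) i c)
       = (\<Sum>k<h. \<alpha>' (Inl k) * M' k c) + (\<Sum>r\<in>D. \<alpha>' (Inr r) * diag_mat d r c)"
      using fD by (simp only: sum.Plus[OF finite_lessThan fD] stack_def comp_def sum.case)
    also have "\<dots> = (\<Sum>k<h. \<alpha> (Inl k) * M' k c) + \<alpha>' (Inr c) * d c"
      by (simp only: diag_sum[OF fD] if_P[OF c]) (simp add: \<alpha>'_def)
    finally have s1': "(\<Sum>i\<in>{..<h} <+> D. \<alpha>' i * stack M' (diag_mat d) i c)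
       = (\<Sum>k<h. \<alpha> (Inl k) * M' k c) + \<alpha>' (Inr c) * d c" .
    show "v c = (\<Sum>i\<in>{..<h} <+> D. \<alpha>' i * stack M' (diag_mat d) i c)"
    proof (cases "c \<in> C")
      case True
      have "v c = (\<Sum>k<h. \<alpha> (Inl k) * M k c) + (\<Sum>r\<in>C. \<alpha> (Inr r) * diag_mat d r c)"
        using \<alpha> True fC by (simp only: sum.Plus[OF finite_lessThan fC] stack_def comp_def sum.case)
      also have "\<dots> = (\<Sum>k<h. \<alpha> (Inl k) * M k c) + \<alpha> (Inr c) * d c"
        using fC True by (simp add: diag_sum)
      also have "(\<Sum>k<h. \<alpha> (Inl k) * M k c) = (\<Sum>k<h. \<alpha> (Inl k) * M' k c)"
        using M' c True by (intro sum.cong) auto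
      finally show ?thesis using s1' True by (simp add: \<alpha>'_def)
    next
      case False
      have "(\<Sum>k<h. \<alpha> (Inl k) * M' k c) = 0"
        using M' c False by (intro sum.neutral) auto
      then show ?thesis using s1' False v0 c by (simp add: \<alpha>'_def)
    qed
  qed
qed

lemma sigma_lc:
  fixes h :: "nat \<Rightarrow> nat" and l n :: nat
  assumes lc: "is_lin_comb ({..<h l} <+> D) D (stack (\<beta> l) (diag_mat d)) v"
    and l: "l < n" and fD: "finite D"
  shows "is_lin_comb ((SIGMA l:{..<n}. {..<h l}) <+> D) D
          (stack (\<lambda>(l, i) c. \<beta> l i c) (diag_mat d)) v"
proof -
  obtain \<alpha> where \<alpha>: "\<forall>c\<in>D. v c = (\<Sum>i\<in>{..<h l} <+> D. \<alpha> i * stack (\<beta> l) (diag_mat d) i c)"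
    using lc unfolding is_lin_comb_def by blast
  define \<alpha>' where "\<alpha>' = (\<lambda>x. case x of Inl (l', k) \<Rightarrow> if l' = l then \<alpha> (Inl k) else 0 | Inr r \<Rightarrow> \<alpha> (Inr r))"
  show ?thesis unfolding is_lin_comb_def
  proof (intro exI[of _ \<alpha>'] ballI)
    fix c assume c: "c \<in> D"
    have fS: "finite (SIGMA l:{..<n}. {..<h l})" by (intro finite_SigmaI) auto
    have "(\<Sum>i\<in>(SIGMA l:{..<n}. {..<h l}) <+> D. \<alpha>' i * stack (\<lambda>(l, i) c. \<beta> l i c) (diag_mat d) i c)
      = (\<Sum>p\<in>(SIGMA l:{..<n}. {..<h l}). (case p of (l', k) \<Rightarrow> if l' = l then \<alpha> (Inl k) else 0) * \<beta> (fst p) (snd p) c)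
        + (\<Sum>r\<in>D. \<alpha> (Inr r) * diag_mat d r c)"
      using fD fS by (simp add: sum.Plus stack_def \<alpha>'_def comp_def case_prod_beta)
    also have "(\<Sum>p\<in>(SIGMA l:{..<n}. {..<h l}). (case p of (l', k) \<Rightarrow> if l' = l then \<alpha> (Inl k) else 0) * \<beta> (fst p) (snd p) c)
       = (\<Sum>l'<n. \<Sum>k<h l'. (if l' = l then \<alpha> (Inl k) else 0) * \<beta> l' k c)"
      by (subst sum.Sigma) (auto simp: split_def)
    also have "\<dots> = (\<Sum>l'<n. if l' = l then (\<Sum>k<h l. \<alpha> (Inl k) * \<beta> l k c) else 0)"
      by (intro sum.cong) auto
    also have "\<dots> = (\<Sum>k<h l. \<alpha> (Inl k) * \<beta> l k c)" using l by (simp add: sum.delta')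
    finally have eq: "(\<Sum>i\<in>(SIGMA l:{..<n}. {..<h l}) <+> D. \<alpha>' i * stack (\<lambda>(l, i) c. \<beta> l i c) (diag_mat d) i c)
      = (\<Sum>k<h l. \<alpha> (Inl k) * \<beta> l k c) + (\<Sum>r\<in>D. \<alpha> (Inr r) * diag_mat d r c)" .
    have "v c = (\<Sum>k<h l. \<alpha> (Inl k) * \<beta> l k c) + (\<Sum>r\<in>D. \<alpha> (Inr r) * diag_mat d r c)"
      using \<alpha> c by (simp only: sum.Plus[OF finite_lessThan fD] stack_def comp_def sum.case)
    then show "v c = (\<Sum>i\<in>(SIGMA l:{..<n}. {..<h l}) <+> D. \<alpha>' i * stack (\<lambda>(l, i) c. \<beta> l i c) (diag_mat d) i c)"
      using eq by simp
  qed
qed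

theorem lemma2:
  fixes n m :: nat and R B :: "nat \<Rightarrow> nat \<Rightarrow> bit"
    and Nt :: "nat \<Rightarrow> (nat \<times> nat) set"
    and h :: "nat \<Rightarrow> nat" and \<beta>c \<beta> :: "nat \<Rightarrow> nat \<Rightarrow> nat \<Rightarrow> bit"
  assumes "eic_problem n m R B"
    and "nbhd_partition n m R B Nt"
    and "\<forall>w<n. centralized_solution n (induced_blocks (Nt w)) (induced_R (Nt w)) B (h w) (\<beta>c w)"
    and "\<forall>w<n. zero_col_ext m (induced_blocks (Nt w)) (h w) (\<beta>c w) (\<beta> w)"
  shows "task_based_solution n m R B h \<beta> \<and> solution_length n h = (\<Sum>i<n. h i)"
proof -
  note P = assms(2)[unfolded nbhd_partition_def]
  have Csub: "induced_blocks (Nt w) \<subseteq> {..<m}" if "w < n" for w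
    using P that unfolding induced_blocks_def req_pairs_def by blast
  have task: "\<exists>l<n. is_lin_comb ({..<h l} <+> {..<m}) {..<m} (stack (\<beta> l) (diag_mat (B u))) (unit_vec a)"
    if ua: "(u, a) \<in> req_pairs n m R" for u a
  proof -
    obtain w where w: "w < n" "(u, a) \<in> Nt w" using P ua by blast
    let ?C = "induced_blocks (Nt w)"
    have aC: "a \<in> ?C" using w unfolding induced_blocks_def by blast
    have u: "u < n" using ua unfolding req_pairs_def by auto
    have "is_lin_comb ({..<h w} <+> ?C) ?C (stack (\<beta>c w) (diag_mat (B u))) (unit_vec a)"
      using assms(3) w u aC unfolding centralized_solution_def induced_R_def by auto
    then have "is_lin_comb ({..<h w} <+> {..<m}) {..<m} (stack (\<beta> w) (diag_mat (B u))) (unit_vec a)"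
      apply (rule ext_lc)
      using Csub[OF w(1)] aC assms(4) w(1) unfolding zero_col_ext_def unit_vec_def by auto
    then show ?thesis using w(1) by blast
  qed
  have zero: "\<beta> u i a = 0" if "u < n" "i < h u" "a < m" "B u a = 0" for u i a
  proof -
    have "a \<notin> induced_blocks (Nt u)"
    proof
      assume "a \<in> induced_blocks (Nt u)"
      then obtain w where "(w, a) \<in> Nt u" unfolding induced_blocks_def by blast
      then have "B u a = 1" using P that(1) unfolding sender_nbhd_def by blast
      then show False using that(4) by simp
    qed
    then show ?thesis using assms(4) that unfolding zero_col_ext_def by auto
  qed
  have lbs: "linear_broadcast_solution n m R B h \<beta>"
    unfolding linear_broadcast_solution_def
  proof (intro conjI)
    show "\<forall>u<n. \<forall>i<h u. \<forall>a<m. B u a = 0 \<longrightarrow> \<beta> u i a = 0" using zero by blast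
    show "\<forall>(u, a)\<in>req_pairs n m R. is_lin_comb ((SIGMA l:{..<n}. {..<h l}) <+> {..<m}) {..<m}
          (stack (\<lambda>(l, i) c. \<beta> l i c) (diag_mat (B u))) (unit_vec a)"
    proof (clarify)
      fix u a assume "(u, a) \<in> req_pairs n m R"
      then obtain l where "l < n" "is_lin_comb ({..<h l} <+> {..<m}) {..<m} (stack (\<beta> l) (diag_mat (B u))) (unit_vec a)"
        using task by blast
      then show "is_lin_comb ((SIGMA l:{..<n}. {..<h l}) <+> {..<m}) {..<m}
          (stack (\<lambda>(l, i) c. \<beta> l i c) (diag_mat (B u))) (unit_vec a)"
        by (intro sigma_lc) auto
    qed
  qed
  show ?thesis using lbs task unfolding task_based_solution_def solution_length_def by auto
qed

end
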